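(* If $X$ is a metric space with $\operatorname{trasdim}X<\infty$, then $\operatorname{trasdim}X<\omega_1$, where $\omega_1$ is the first uncountable ordinal.
   Context: A family $\mathcal A$ of subsets of a metric space is uniformly bounded if there is $C>0$ with $\operatorname{diam}A\le C$ for all $A\in\mathcal A$; it is $r$-disjoint if $d(A_1,A_2)\ge r$ for all distinct $A_1,A_2\in\mathcal A$. For a set $L$, $\mathrm{Fin}\,L$ is the collection of finite nonempty subsets of $L$. For $M\subset \mathrm{Fin}\,L$ and $\sigma\in\{\emptyset\}\cup\mathrm{Fin}\,L$, $M^\sigma=\{\tau\in\mathrm{Fin}\,L:\sigma\cup\tau\in M,\ \sigma\cap\tau=\emptyset\}$, and $M^a=M^{\{a\}}$. The ordinal $\operatorname{Ord}M$: $\operatorname{Ord}M=0$ iff $M=\emptyset$; $\operatorname{Ord}M\le\alpha$ iff $\operatorname{Ord}M^a<\alpha$ for every $a\in L$; $\operatorname{Ord}M=\alpha$ iff $\operatorname{Ord}M\le\alpha$ and not $\operatorname{Ord}M<\alpha$; $\operatorname{Ord}M=\infty$ iff $\operatorname{Ord} M\le\alpha$ for no ordinal $\alpha$ ($\infty$ is larger than every ordinal). For a metric space $(X,d)$, $A(X,d)$ is the set of $\sigma\in\mathrm{Fin}\,\mathbb N$ such that there do NOT exist uniformly bounded families $\mathcal V_i$, $i\in\sigma$, with $\bigcup_{i\in\sigma}\mathcal V_i$ covering $X$ and each $\mathcal V_i$ being $i$-disjoint. Define $\operatorname{trasdim}X=\operatorname{Ord}A(X,d)$, except $\operatorname{trasdim}X=-1$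 iff $X$ is bounded. *)

theory Defs
  imports "HOL-Analysis.Analysis"
begin

text \<open>Fin L: finite nonempty subsets of L (here L is the whole type).\<close>
definition Fin :: "'a set set" where
  "Fin = {\<sigma>. finite \<sigma> \<and> \<sigma> \<noteq> {}}"

definition link :: "'a set set \<Rightarrow> 'a set \<Rightarrow> 'a set set" where
  "link M \<sigma> = {\<tau> \<in> Fin. \<sigma> \<union> \<tau> \<in> M \<and> \<sigma> \<inter> \<tau> = {}}"

text \<open>ord_le r M x means Ord M \<le> alpha, where the ordinal alpha is represented
  by the element x of the well-order r (alpha = order type of the strict
  initial segment of r below x). Literally the paper's recursive definition:
  Ord M = 0 iff M is empty, and Ord M \<le> alpha iff Ord M^a < alpha for all a,
  where Ord N < alpha means Ord N \<le> beta for some beta < alpha.\<close>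
inductive ord_le :: "'b rel \<Rightarrow> 'a set set \<Rightarrow> 'b \<Rightarrow> bool" for r :: "'b rel" where
  ord_le_empty: "x \<in> Field r \<Longrightarrow> ord_le r {} x"
| ord_le_step: "x \<in> Field r \<Longrightarrow>
     (\<forall>a. \<exists>y. (y, x) \<in> r \<and> y \<noteq> x \<and> ord_le r (link M {a}) y) \<Longrightarrow> ord_le r M x"

definition unif_bounded :: "('a \<Rightarrow> 'a \<Rightarrow> real) \<Rightarrow> 'a set set \<Rightarrow> bool" where
  "unif_bounded d \<V> \<longleftrightarrow> (\<exists>C>0. \<forall>A\<in>\<V>. \<forall>x\<in>A. \<forall>y\<in>A. d x y \<le> C)"

definition r_disjoint :: "('a \<Rightarrow> 'a \<Rightarrow> real) \<Rightarrow> real \<Rightarrow> 'a set set \<Rightarrow> bool" where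
  "r_disjoint d r \<V> \<longleftrightarrow>
     (\<forall>A1\<in>\<V>. \<forall>A2\<in>\<V>. A1 \<noteq> A2 \<longrightarrow> (\<forall>x\<in>A1. \<forall>y\<in>A2. r \<le> d x y))"

definition asdim_set :: "'a set \<Rightarrow> ('a \<Rightarrow> 'a \<Rightarrow> real) \<Rightarrow> nat set set" where
  "asdim_set X d = {\<sigma> \<in> Fin. \<not> (\<exists>\<V> :: nat \<Rightarrow> 'a set set.
      (\<forall>i\<in>\<sigma>. (\<forall>V\<in>\<V> i. V \<subseteq> X) \<and> unif_bounded d (\<V> i) \<and> r_disjoint d (real i) (\<V> i))
      \<and> X \<subseteq> (\<Union>i\<in>\<sigma>. \<Union>(\<V> i)))}"

end

theory Submission
  imports Defs "HOL-Library.Countable_Set_Type"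
begin

unbundle cardinal_syntax

abbreviation "cc \<equiv> cardSuc natLeq"

lemma cc_card: "Card_order cc"
  by (simp add: cardSuc_Card_order natLeq_Card_order)

lemma cc_under_countable:
  assumes "a \<in> Field cc" shows "countable (underS cc a)"
proof -
  have "|underS cc a| <o cc" using card_of_underS[OF cc_card assms] .
  hence "|underS cc a| \<le>o natLeq"
    using cardSuc_ordLeq_ordLess[OF natLeq_Card_order card_of_Card_order] by blast
  thus ?thesis using countable_card_le_natLeq by blast
qed

lemma cc_field_uncountable: "\<not> countable (Field cc)"
proof
  assume "countable (Field cc)"
  hence "|Field cc| \<le>o natLeq" using countable_card_le_natLeq by blast
  moreover have "|Field cc| =o cc" using card_of_Field_ordIso[OF cc_card] .
  ultimately have "cc \<le>o natLeq" using ordIso_ordLeq_trans ordIso_symmetric by blast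
  moreover have "natLeq <o cc" using cardSuc_greater[OF natLeq_Card_order] .
  ultimately show False using not_ordLess_ordLeq by blast
qed

lemma cc_bound:
  fixes f :: "nat \<Rightarrow> nat set"
  assumes "\<And>n. f n \<in> Field cc"
  shows "\<exists>y\<in>Field cc. \<forall>n. (f n, y) \<in> cc \<and> f n \<noteq> y"
proof -
  let ?L = "\<Union>n. insert (f n) (underS cc (f n))"
  have "countable ?L" using cc_under_countable assms by auto
  hence "\<not> Field cc \<subseteq> ?L" using cc_field_uncountable countable_subset by blast
  then obtain y where y: "y \<in> Field cc" "y \<notin> ?L" by blast
  have wo: "Well_order cc" using cc_card unfolding card_order_on_def by blast
  hence tot: "total_on (Field cc) cc"
    unfolding well_order_on_def linear_order_on_def by blast
  have "\<forall>n. (f n, y) \<in> cc \<and> f n \<noteq> y"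
  proof
    fix n
    have "y \<noteq> f n" "(y, f n) \<notin> cc" using y(2) by (auto simp: underS_def)
    moreover have "(y, f n) \<in> cc \<or> (f n, y) \<in> cc"
      using tot y(1) assms[of n] \<open>y \<noteq> f n\<close> unfolding total_on_def by blast
    ultimately show "(f n, y) \<in> cc \<and> f n \<noteq> y" by auto
  qed
  thus ?thesis using y(1) by blast
qed

lemma main:
  fixes M :: "nat set set"
  assumes "ord_le r M x"
  shows "\<exists>y\<in>Field cc. ord_le cc M y"
  using assms
proof (induction rule: ord_le.induct)
  case (ord_le_empty x)
  have "Field cc \<noteq> {}" using cc_field_uncountable by auto
  then obtain z where z: "z \<in> Field cc" by blast
  have "ord_le cc ({}::nat set set) z" by (rule ord_le.ord_le_empty[OF z])
  then show ?case using z by blast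
next
  case (ord_le_step x M)
  have "\<forall>a. \<exists>y. y \<in> Field cc \<and> ord_le cc (link M {a}) y"
    using ord_le_step.IH by blast
  then obtain f where f: "\<And>a. f a \<in> Field cc" "\<And>a. ord_le cc (link M {a}) (f a)"
    by metis
  obtain y where y: "y \<in> Field cc" "\<forall>n. (f n, y) \<in> cc \<and> f n \<noteq> y"
    using cc_bound[of f] f(1) by blast
  have "ord_le cc M y"
    by (rule ord_le.ord_le_step[OF y(1)]) (use f(2) y(2) in blast)
  thus ?case using y(1) by blast
qed

theorem theorem4:
  fixes X :: "'a set" and d :: "'a \<Rightarrow> 'a \<Rightarrow> real"
    and r :: "'b rel" and x :: 'b
  assumes "Metric_space X d"
    and "Well_order r" and "x \<in> Field r"
    and "Metric_space.mbounded X d X \<or> ord_le r (asdim_set X d) x"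
  shows "Metric_space.mbounded X d X \<or>
         (\<exists>y \<in> Field (cardSuc natLeq). ord_le (cardSuc natLeq) (asdim_set X d) y)"
  using assms(4) main[of r "asdim_set X d" x] by blast

end
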